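(* Let $X\in L^\infty$ and let $\mathcal{G}\subseteq\mathcal{H}$ be sub-$\sigma$-fields of $\mathcal{F}$. If $Y\in\mathbb{E}[X\mid\mathcal{H}]$ and $Z\in\mathbb{E}[Y\mid\mathcal{G}]$, then $Z\in\mathbb{E}[X\mid\mathcal{G}]$.
   Context: $\mathbb{K}$ is a local field with non-archimedean absolute value $|\cdot|$ satisfying $|x|=0 \iff x=0$, $|xy|=|x||y|$, $|x+y|\le|x|\vee|y|$. $(\Omega,\mathcal{F},\mathbb{P})$ is a probability space; all (in)equalities are a.s. $L^\infty$ is the space of $\mathbb{K}$-valued random variables $X$ with $\operatorname{ess\,sup}|X|<\infty$; $L^\infty(\mathcal{G})$ its $\mathcal{G}$-measurable subspace. For a non-negative real random variable $S$, $\operatorname{ess\,sup}\{S\mid\mathcal{G}\}:=\sup_{p\ge1}\mathbb{E}[S^p\mid\mathcal{G}]^{1/p}$ (usual real conditional expectation), $\|X\|_\mathcal{G}:=\operatorname{ess\,sup}\{|X|\mid\mathcal{G}\}$, and the conditional expectation is the set $\mathbb{E}[X\mid\mathcal{G}]:=\{Y\in L^\infty(\mathcal{G}): \|X-Y\|_\mathcal{G}\le\|X-Z\|_\mathcal{G}\text{ for all }Z\in L^\infty(\mathcal{G})\}$. *)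

theory Defs
  imports "HOL-Analysis.Analysis" "HOL-Probability.Probability"
begin

definition nonarch_abs :: "('k::field \<Rightarrow> real) \<Rightarrow> bool" where
  "nonarch_abs a \<longleftrightarrow>
     (\<forall>x. a x = 0 \<longleftrightarrow> x = 0) \<and>
     (\<forall>x y. a (x * y) = a x * a y) \<and>
     (\<forall>x y. a (x + y) \<le> max (a x) (a y))"

definition local_field_abs :: "('k::{field,metric_space} \<Rightarrow> real) \<Rightarrow> bool" where
  "local_field_abs a \<longleftrightarrow>
     nonarch_abs a \<and>
     (\<forall>x y. dist x y = a (x - y)) \<and>
     (\<exists>x. a x \<noteq> 0 \<and> a x \<noteq> 1) \<and>
     (\<forall>f::nat \<Rightarrow> 'k. Cauchy f \<longrightarrow> convergent f) \<and>
     locally_compact_space (euclidean :: 'k topology)"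

text \<open>L-infinity (w.r.t. M) of K-valued random variables measurable w.r.t. the
  sub-sigma-field G (take G = M for the full space).\<close>
definition Linf :: "'a measure \<Rightarrow> 'a measure \<Rightarrow> ('k::{field,metric_space} \<Rightarrow> real)
    \<Rightarrow> ('a \<Rightarrow> 'k) \<Rightarrow> bool" where
  "Linf M G a X \<longleftrightarrow> X \<in> borel_measurable G \<and> (\<exists>C. AE \<omega> in M. a (X \<omega>) \<le> C)"

definition cond_esssup :: "'a measure \<Rightarrow> 'a measure \<Rightarrow> ('a \<Rightarrow> real) \<Rightarrow> 'a \<Rightarrow> ereal" where
  "cond_esssup M G S \<omega> =
     (SUP p\<in>{1::nat..}. ereal (real_cond_exp M G (\<lambda>\<omega>. S \<omega> ^ p) \<omega> powr (1 / real p)))"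

definition cond_norm :: "'a measure \<Rightarrow> 'a measure \<Rightarrow> ('k \<Rightarrow> real) \<Rightarrow> ('a \<Rightarrow> 'k) \<Rightarrow> 'a \<Rightarrow> ereal" where
  "cond_norm M G a X = cond_esssup M G (\<lambda>\<omega>. a (X \<omega>))"

definition cond_exp_set :: "'a measure \<Rightarrow> 'a measure \<Rightarrow> ('k::{field,metric_space} \<Rightarrow> real)
    \<Rightarrow> ('a \<Rightarrow> 'k) \<Rightarrow> ('a \<Rightarrow> 'k) set" where
  "cond_exp_set M G a X =
     {Y. Linf M G a Y \<and>
         (\<forall>Z. Linf M G a Z \<longrightarrow>
            (AE \<omega> in M. cond_norm M G a (\<lambda>\<omega>. X \<omega> - Y \<omega>) \<omega>
                          \<le> cond_norm M G a (\<lambda>\<omega>. X \<omega> - Z \<omega>) \<omega>))}"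

end

theory Submission
  imports Defs
begin


lemma lf_basic:
  assumes "local_field_abs a"
  shows "\<And>x y. dist x y = a (x - y)" "\<And>x y. a (x * y) = a x * a y"
    "\<And>x y. a (x + y) \<le> max (a x) (a y)" "\<And>x. a x = 0 \<longleftrightarrow> x = 0"
    "\<And>x. a x \<ge> 0" "\<And>x. a (- x) = a x" "a 1 = 1"
    "\<And>x y z. a (x - z) \<le> max (a (x - y)) (a (y - z))"
proof -
  show d: "\<And>x y. dist x y = a (x - y)" using assms unfolding local_field_abs_def by auto
  show m: "\<And>x y. a (x * y) = a x * a y" using assms unfolding local_field_abs_def nonarch_abs_def by auto
  show u: "\<And>x y. a (x + y) \<le> max (a x) (a y)" using assms unfolding local_field_abs_def nonarch_abs_def by auto
  show z: "\<And>x. a x = 0 \<longleftrightarrow> x = 0" using assms unfolding local_field_abs_def nonarch_abs_def by auto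
  show "\<And>x. a x \<ge> 0" by (metis d diff_zero zero_le_dist)
  show "\<And>x. a (- x) = a x" by (metis d dist_commute diff_0 diff_zero)
  have "a 1 = a 1 * a 1" using m[of 1 1] by simp
  moreover have "a 1 \<noteq> 0" using z[of 1] by simp
  ultimately show "a 1 = 1" by simp
  show "\<And>x y z. a (x - z) \<le> max (a (x - y)) (a (y - z))"
    by (metis u diff_add_cancel add_diff_eq add.commute diff_diff_eq2 diff_add_eq)
qed

lemma lf_exists_big:
  assumes "local_field_abs a"
  shows "\<exists>c. a c > 1"
proof -
  obtain x where x: "a x \<noteq> 0" "a x \<noteq> 1" using assms unfolding local_field_abs_def by auto
  note B = lf_basic[OF assms]
  show ?thesis
  proof (cases "a x > 1")
    case True then show ?thesis by blast
  next
    case False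
    then have lt: "0 < a x" "a x < 1" using x B(5)[of x] by auto
    have "x \<noteq> 0" using x B(4) by auto
    then have "a x * a (inverse x) = 1" using B(2)[of x "inverse x"] B(7) by simp
    then have "a (inverse x) = 1 / a x" using lt by (simp add: field_simps)
    then have "a (inverse x) > 1" using lt by simp
    then show ?thesis by blast
  qed
qed

lemma lf_pow:
  assumes "local_field_abs a"
  shows "a (c ^ n) = a c ^ n"
  by (induction n) (simp_all add: lf_basic[OF assms])

lemma lf_separable:
  fixes a :: "'k::{field,metric_space} \<Rightarrow> real"
  assumes "local_field_abs a"
  shows "\<exists>D::'k set. countable D \<and> (\<forall>x e. e > 0 \<longrightarrow> (\<exists>d\<in>D. dist x d < e))"
proof -
  note B = lf_basic[OF assms]
  obtain c :: 'k where c: "a c > 1" using lf_exists_big[OF assms] by blast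
  have lc: "locally_compact_space (euclidean :: 'k topology)" using assms unfolding local_field_abs_def by auto
  then obtain U K where UK: "open U" "compact K" "(0::'k) \<in> U" "U \<subseteq> K"
    unfolding locally_compact_space_def by (metis (no_types, lifting) topspace_euclidean UNIV_I open_openin compactin_euclidean_iff)
  obtain e where e: "e > 0" "ball 0 e \<subseteq> U" using UK open_contains_ball by blast
  define Kn where "Kn n = (\<lambda>z. c ^ n * z) ` K" for n
  have cpt: "compact (Kn n)" for n
  proof -
    have "continuous_on K (\<lambda>z. c ^ n * z)"
    proof (rule continuous_on_iff[THEN iffD2], intro ballI allI impI)
      fix x and r :: real assume "x \<in> K" "0 < r"
      have pos: "a c ^ n > 0" using c by simp
      show "\<exists>d>0. \<forall>x'\<in>K. dist x' x < d \<longrightarrow> dist (c ^ n * x') (c ^ n * x) < r"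
      proof (intro exI[of _ "r / a c ^ n"] conjI ballI impI)
        show "r / a c ^ n > 0" using pos \<open>0 < r\<close> by simp
        fix x' assume "x' \<in> K" "dist x' x < r / a c ^ n"
        then have "a (x' - x) * a c ^ n < r" using pos B(1) by (simp add: field_simps)
        moreover have "dist (c ^ n * x') (c ^ n * x) = a c ^ n * a (x' - x)"
          using B(1) B(2) lf_pow[OF assms] by (metis right_diff_distrib)
        ultimately show "dist (c ^ n * x') (c ^ n * x) < r" by (simp add: mult.commute)
      qed
    qed
    then show ?thesis unfolding Kn_def using UK(2) compact_continuous_image by blast
  qed
  have cover: "\<exists>n. y \<in> Kn n" for y
  proof -
    obtain n where n: "a y / e < a c ^ n" using real_arch_pow[OF c] by blast
    have pos: "a c ^ n > 0" using c by simp
    have "c ^ n \<noteq> 0" using pos B(4) lf_pow[OF assms] by (metis less_irrefl)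
    have "a (inverse (c ^ n) * y) = a y / a c ^ n"
    proof -
      have "a (c ^ n) * a (inverse (c ^ n)) = 1" using B(2)[of "c^n" "inverse (c^n)"] B(7) \<open>c ^ n \<noteq> 0\<close> by simp
      then have "a c ^ n * a (inverse (c ^ n)) = 1" using lf_pow[OF assms] by simp
      then have "a (inverse (c ^ n)) = 1 / a c ^ n" using pos by (metis less_irrefl mult.commute nonzero_eq_divide_eq)
      then show ?thesis using B(2) by simp
    qed
    also have "\<dots> < e" using n pos e by (simp add: field_simps)
    finally have "inverse (c ^ n) * y \<in> ball 0 e" using B(1) B(6) by (simp add: dist_commute)
    then have "inverse (c ^ n) * y \<in> K" using e UK by auto
    moreover have "y = c ^ n * (inverse (c ^ n) * y)" using \<open>c ^ n \<noteq> 0\<close> by simp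
    ultimately show ?thesis unfolding Kn_def by blast
  qed
  have "\<forall>n m. \<exists>F. finite F \<and> F \<subseteq> Kn n \<and> Kn n \<subseteq> \<Union>((\<lambda>x. ball x (1 / (Suc m))) ` F)"
  proof (intro allI)
    fix n m
    have "Kn n \<subseteq> \<Union>((\<lambda>x. ball x (1 / (Suc m))) ` Kn n)" by auto
    then obtain F where "F \<subseteq> Kn n" "finite F" "Kn n \<subseteq> \<Union>((\<lambda>x. ball x (1 / (Suc m))) ` F)"
      using compactE_image[OF cpt[of n], of "Kn n" "\<lambda>x. ball x (1 / (Suc m))"] by blast
    then show "\<exists>F. finite F \<and> F \<subseteq> Kn n \<and> Kn n \<subseteq> \<Union>((\<lambda>x. ball x (1 / (Suc m))) ` F)"
      by blast
  qed
  then obtain F where F: "\<And>n m. finite (F n m) \<and> Kn n \<subseteq> \<Union>((\<lambda>x. ball x (1 / (Suc m))) ` F n m)"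
    by metis
  define D where "D = (\<Union>n. \<Union>m. F n m)"
  have "countable D" unfolding D_def using F by (simp add: countable_finite)
  moreover have "\<exists>d\<in>D. dist x d < r" if "r > 0" for x and r :: real
  proof -
    obtain m where m: "1 / real (Suc m) < r" using \<open>r > 0\<close>
      by (metis nat_approx_posE)
    obtain n where "x \<in> Kn n" using cover by blast
    then obtain d where "d \<in> F n m" "x \<in> ball d (1 / Suc m)" using F by blast
    then have "dist x d < r" using m by (simp add: dist_commute)
    then show ?thesis unfolding D_def using \<open>d \<in> F n m\<close> by blast
  qed
  ultimately show ?thesis by blast
qed



lemma lf_meas:
  fixes a :: "'k::{field,metric_space} \<Rightarrow> real"
  assumes "local_field_abs a" "U \<in> borel_measurable M" "V \<in> borel_measurable M"
  shows "(\<lambda>\<omega>. a (U \<omega> - V \<omega>)) \<in> borel_measurable M"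
proof -
  note B = lf_basic[OF assms(1)]
  obtain D :: "'k set" where D: "countable D" "\<And>x e. e > 0 \<Longrightarrow> \<exists>d\<in>D. dist x d < e"
    using lf_separable[OF assms(1)] by blast
  have dm: "(\<lambda>\<omega>. dist (W \<omega>) d) \<in> borel_measurable M" if "W \<in> borel_measurable M" for W and d :: 'k
  proof -
    have "(\<lambda>x. dist x d) \<in> borel_measurable borel"
      by (intro borel_measurable_continuous_onI continuous_intros)
    from measurable_compose[OF that this] show ?thesis by simp
  qed
  show ?thesis
  proof (subst borel_measurable_iff_less, intro allI)
    fix t :: real
    have eq: "{w \<in> space M. a (U w - V w) < t} =
      (\<Union>d\<in>D. {w \<in> space M. dist (U w) d < t} \<inter> {w \<in> space M. dist (V w) d < t})"
    proof (intro equalityI subsetI)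
      fix w assume "w \<in> {w \<in> space M. a (U w - V w) < t}"
      then have w: "w \<in> space M" "dist (U w) (V w) < t" using B(1) by auto
      then have "t > 0" by (metis le_less_trans zero_le_dist)
      obtain d where d: "d \<in> D" "dist (U w) d < t" using D(2)[OF \<open>t > 0\<close>] by blast
      have "dist (V w) d \<le> max (dist (V w) (U w)) (dist (U w) d)" using B(1) B(8) by simp
      then have "dist (V w) d < t" using w d by (simp add: dist_commute)
      then show "w \<in> (\<Union>d\<in>D. {w \<in> space M. dist (U w) d < t} \<inter> {w \<in> space M. dist (V w) d < t})"
        using w d by blast
    next
      fix w assume "w \<in> (\<Union>d\<in>D. {w \<in> space M. dist (U w) d < t} \<inter> {w \<in> space M. dist (V w) d < t})"
      then obtain d where "w \<in> space M" "dist (U w) d < t" "dist (V w) d < t" by blast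
      moreover have "dist (U w) (V w) \<le> max (dist (U w) d) (dist d (V w))" using B(1) B(8) by simp
      ultimately show "w \<in> {w \<in> space M. a (U w - V w) < t}" using B(1) by (simp add: dist_commute)
    qed
    have "{w \<in> space M. dist (U w) d < t} \<in> sets M" for d
      using dm[OF assms(2), of d, unfolded borel_measurable_iff_less] by blast
    moreover have "{w \<in> space M. dist (V w) d < t} \<in> sets M" for d
      using dm[OF assms(3), of d, unfolded borel_measurable_iff_less] by blast
    ultimately show "{w \<in> space M. a (U w - V w) < t} \<in> sets M"
      unfolding eq using D(1) by (intro sets.countable_UN'') auto
  qed
qed



lemma root_pow_aux:
  fixes b :: real assumes "0 \<le> b" "p \<ge> (1::nat)"
  shows "(b ^ p) powr (1 / real p) = b"
proof (cases "b = 0")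
  case True then show ?thesis using assms by simp
next
  case False
  then have "b > 0" using assms by simp
  then have "(b ^ p) powr (1 / real p) = (b powr real p) powr (1 / real p)" by (simp add: powr_realpow)
  also have "\<dots> = b" using assms \<open>b > 0\<close> by (simp add: powr_powr)
  finally show ?thesis .
qed

lemma pow_root_aux:
  fixes x T :: real assumes "0 \<le> x" "p \<ge> (1::nat)" "x powr (1 / real p) \<le> T"
  shows "x \<le> T ^ p"
proof (cases "x = 0")
  case True
  then show ?thesis using assms by simp
next
  case False
  then have "x = (x powr (1 / real p)) ^ p" using assms by (simp add: powr_power)
  also have "\<dots> \<le> T ^ p" using assms by (intro power_mono) auto
  finally show ?thesis .
qed

lemma limit_aux:
  fixes T e P :: real
  assumes "0 \<le> T" "e > 0" "\<And>p::nat. p \<ge> 1 \<Longrightarrow> (T + e) ^ p * P \<le> T ^ p"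
  shows "P \<le> 0"
proof (rule ccontr)
  assume "\<not> P \<le> 0"
  then have P: "P > 0" by simp
  define r where "r = T / (T + e)"
  have r: "0 \<le> r" "r < 1" using assms unfolding r_def by (auto simp: field_simps)
  obtain n where n: "r ^ n < P" using real_arch_pow_inv[OF P r(2)] by blast
  have "r ^ Suc n \<le> r ^ n" using r by (simp add: mult_left_le_one_le)
  then have "r ^ Suc n < P" using n by simp
  moreover have tp: "(T + e) ^ Suc n > 0" using assms by simp
  ultimately have "(T + e) ^ Suc n * r ^ Suc n < (T + e) ^ Suc n * P"
    using mult_strict_left_mono by blast
  moreover have "(T + e) ^ Suc n * r ^ Suc n = T ^ Suc n"
    using assms unfolding r_def by (simp add: power_mult_distrib[symmetric])
  ultimately show False using assms(3)[of "Suc n"] by simp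
qed

lemma cesup_meas[measurable]:
  "cond_esssup M F S \<in> borel_measurable F"
  unfolding cond_esssup_def by measurable

lemma cesup_nonneg: "cond_esssup M F S \<omega> \<ge> 0"
  unfolding cond_esssup_def
  by (rule SUP_upper2[of 1]) auto

lemma cesup_le:
  fixes S :: "'a \<Rightarrow> real" and Q :: "'a \<Rightarrow> ereal"
  assumes "prob_space M" "subalgebra M F" "S \<in> borel_measurable M"
    "AE \<omega> in M. S \<omega> \<ge> 0" "AE \<omega> in M. S \<omega> \<le> C"
    "Q \<in> borel_measurable F" "AE \<omega> in M. ereal (S \<omega>) \<le> Q \<omega>"
  shows "AE \<omega> in M. cond_esssup M F S \<omega> \<le> Q \<omega>"
proof -
  interpret prob_space M by fact
  interpret finite_measure_subalgebra M F
    by unfold_locales (rule assms(2))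
  define C' where "C' = max C 0"
  define B where "B \<omega> = real_of_ereal (min (Q \<omega>) (ereal C'))" for \<omega>
  have Bm[measurable]: "B \<in> borel_measurable F" unfolding B_def using assms(6) by measurable
  have BmM[measurable]: "B \<in> borel_measurable M" using measurable_from_subalg[OF assms(2) Bm] .
  have [measurable]: "S \<in> borel_measurable M" by fact
  have SB: "AE \<omega> in M. S \<omega> \<le> B \<omega> \<and> 0 \<le> B \<omega> \<and> B \<omega> \<le> C' \<and> ereal (B \<omega>) \<le> Q \<omega>"
    using assms(4,5,7)
  proof eventually_elim
    case (elim \<omega>)
    have c0: "0 \<le> C'" "S \<omega> \<le> C'" using elim unfolding C'_def by auto
    show ?case
    proof (cases "Q \<omega>")
      case (real r)
      then have "B \<omega> = min r C'" unfolding B_def by (simp add: min_def)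
      moreover have "S \<omega> \<le> r" using elim real by simp
      ultimately show ?thesis using c0 elim real by simp
    next
      case PInf
      then have "B \<omega> = C'" unfolding B_def by simp
      then show ?thesis using c0 elim PInf by simp
    next
      case MInf
      then show ?thesis using elim by simp
    qed
  qed
  have step: "AE \<omega> in M. real_cond_exp M F (\<lambda>\<omega>. S \<omega> ^ p) \<omega> powr (1 / real p) \<le> B \<omega>"
    if "p \<ge> 1" for p :: nat
  proof -
    have "AE \<omega> in M. norm (S \<omega> ^ p) \<le> C' ^ p"
      using assms(4,5)
    proof eventually_elim
      case (elim \<omega>)
      then have "\<bar>S \<omega>\<bar> \<le> C'" unfolding C'_def by simp
      then have "\<bar>S \<omega>\<bar> ^ p \<le> C' ^ p" by (rule power_mono) simp
      then show ?case by (metis power_abs real_norm_def)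
    qed
    moreover have "(\<lambda>\<omega>. S \<omega> ^ p) \<in> borel_measurable M" using assms(3) by (rule borel_measurable_power)
    ultimately have i1: "integrable M (\<lambda>\<omega>. S \<omega> ^ p)"
      by (rule integrable_const_bound)
    have "AE \<omega> in M. norm (B \<omega> ^ p) \<le> C' ^ p"
      using SB
    proof eventually_elim
      case (elim \<omega>)
      then have "0 \<le> B \<omega>" "B \<omega> \<le> C'" by blast+
      then have "\<bar>B \<omega>\<bar> \<le> C'" by linarith
      then have "\<bar>B \<omega>\<bar> ^ p \<le> C' ^ p" by (rule power_mono) simp
      then show ?case by (metis power_abs real_norm_def)
    qed
    moreover have "(\<lambda>\<omega>. B \<omega> ^ p) \<in> borel_measurable M" using BmM by (rule borel_measurable_power)
    ultimately have i2: "integrable M (\<lambda>\<omega>. B \<omega> ^ p)"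
      by (rule integrable_const_bound)
    have "AE \<omega> in M. S \<omega> ^ p \<le> B \<omega> ^ p"
      using SB assms(4) by eventually_elim (intro power_mono; blast)
    then have m: "AE \<omega> in M. real_cond_exp M F (\<lambda>\<omega>. S \<omega> ^ p) \<omega> \<le> real_cond_exp M F (\<lambda>\<omega>. B \<omega> ^ p) \<omega>"
      by (rule real_cond_exp_mono[OF _ i1 i2])
    have e: "AE \<omega> in M. real_cond_exp M F (\<lambda>\<omega>. B \<omega> ^ p) \<omega> = B \<omega> ^ p"
      using Bm by (intro real_cond_exp_F_meas[OF i2] borel_measurable_power)
    have pos: "AE \<omega> in M. real_cond_exp M F (\<lambda>\<omega>. S \<omega> ^ p) \<omega> \<ge> 0"
    proof (rule real_cond_exp_pos)
      show "AE \<omega> in M. 0 \<le> S \<omega> ^ p" using assms(4) by eventually_elim simp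
      show "(\<lambda>\<omega>. S \<omega> ^ p) \<in> borel_measurable M" using assms(3) by (rule borel_measurable_power)
    qed
    show ?thesis using m e pos SB
    proof eventually_elim
      case (elim \<omega>)
      then have "real_cond_exp M F (\<lambda>\<omega>. S \<omega> ^ p) \<omega> powr (1 / real p) \<le> (B \<omega> ^ p) powr (1 / real p)"
        by (intro powr_mono2) simp_all
      also have "\<dots> = B \<omega>" using elim that by (intro root_pow_aux) simp_all
      finally show ?case .
    qed
  qed
  have "AE \<omega> in M. \<forall>p::nat. p \<ge> 1 \<longrightarrow> real_cond_exp M F (\<lambda>\<omega>. S \<omega> ^ p) \<omega> powr (1 / real p) \<le> B \<omega>"
    unfolding AE_all_countable
  proof
    fix p :: nat show "AE \<omega> in M. p \<ge> 1 \<longrightarrow> real_cond_exp M F (\<lambda>\<omega>. S \<omega> ^ p) \<omega> powr (1 / real p) \<le> B \<omega>"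
      by (cases "p \<ge> 1") (use step[of p] in \<open>simp_all add: eventually_mono\<close>)
  qed
  then show ?thesis using SB
  proof eventually_elim
    case (elim \<omega>)
    have "cond_esssup M F S \<omega> \<le> ereal (B \<omega>)"
      unfolding cond_esssup_def using elim by (intro SUP_least) simp
    also have "\<dots> \<le> Q \<omega>" using elim by blast
    finally show ?case .
  qed
qed



lemma cesup_ge:
  fixes S :: "'a \<Rightarrow> real"
  assumes "prob_space M" "subalgebra M F" "S \<in> borel_measurable M"
    "AE \<omega> in M. S \<omega> \<ge> 0" "AE \<omega> in M. S \<omega> \<le> C"
  shows "AE \<omega> in M. ereal (S \<omega>) \<le> cond_esssup M F S \<omega>"
proof -
  interpret prob_space M by fact
  interpret finite_measure_subalgebra M F
    by unfold_locales (rule assms(2))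
  have [measurable]: "S \<in> borel_measurable M" by fact
  define C' where "C' = max C 1"
  have C'pos: "C' > 0" unfolding C'_def by simp
  have SC': "AE \<omega> in M. S \<omega> \<le> C'" using assms(5) unfolding C'_def by eventually_elim simp
  define N where "N = cond_esssup M F S"
  have Nm[measurable]: "N \<in> borel_measurable F" unfolding N_def by (rule cesup_meas)
  have NC: "AE \<omega> in M. N \<omega> \<le> ereal C'"
  proof -
    have h: "AE \<omega> in M. ereal (S \<omega>) \<le> ereal C'" using SC' by eventually_elim simp
    show ?thesis unfolding N_def
      by (rule cesup_le[OF assms(1,2,3,4) SC' _ h]) simp
  qed
  define T where "T \<omega> = real_of_ereal (N \<omega>)" for \<omega>
  have Tm[measurable]: "T \<in> borel_measurable F" unfolding T_def by measurable
  have TmM[measurable]: "T \<in> borel_measurable M" using measurable_from_subalg[OF assms(2) Tm] .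
  have T0: "T \<omega> \<ge> 0" for \<omega>
    unfolding T_def N_def using cesup_nonneg[of M F S \<omega>] by (simp add: real_of_ereal_pos)
  have NT: "AE \<omega> in M. N \<omega> = ereal (T \<omega>) \<and> T \<omega> \<le> C'"
    using NC
  proof eventually_elim
    case (elim \<omega>)
    have "0 \<le> N \<omega>" unfolding N_def by (rule cesup_nonneg)
    then show ?case using elim unfolding T_def by (cases "N \<omega>") auto
  qed
  have ceT: "AE \<omega> in M. real_cond_exp M F (\<lambda>\<omega>. S \<omega> ^ p) \<omega> \<le> T \<omega> ^ p" if p1: "p \<ge> 1" for p :: nat
  proof -
    have pos: "AE \<omega> in M. real_cond_exp M F (\<lambda>\<omega>. S \<omega> ^ p) \<omega> \<ge> 0"
    proof (rule real_cond_exp_pos)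
      show "AE \<omega> in M. 0 \<le> S \<omega> ^ p" using assms(4) by eventually_elim simp
      show "(\<lambda>\<omega>. S \<omega> ^ p) \<in> borel_measurable M" using assms(3) by (rule borel_measurable_power)
    qed
    show ?thesis using pos NT
    proof eventually_elim
      case (elim \<omega>)
      have "ereal (real_cond_exp M F (\<lambda>\<omega>. S \<omega> ^ p) \<omega> powr (1 / real p)) \<le> N \<omega>"
        unfolding N_def cond_esssup_def by (rule SUP_upper) (use p1 in simp)
      moreover have "N \<omega> = ereal (T \<omega>)" using elim by blast
      ultimately have "real_cond_exp M F (\<lambda>\<omega>. S \<omega> ^ p) \<omega> powr (1 / real p) \<le> T \<omega>"
        by (simp only: ereal_less_eq)
      moreover have "0 \<le> real_cond_exp M F (\<lambda>\<omega>. S \<omega> ^ p) \<omega>" using elim by blast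
      ultimately show ?case using p1 by (intro pow_root_aux)
    qed
  qed
  have epsstep: "AE \<omega> in M. S \<omega> \<le> T \<omega> + e" if "e > 0" for e :: real
  proof -
    define A where "A = {\<omega> \<in> space M. T \<omega> + e < S \<omega>}"
    have A[measurable]: "A \<in> sets M" unfolding A_def by measurable
    define g where "g = (indicator A :: 'a \<Rightarrow> real)"
    have gm[measurable]: "g \<in> borel_measurable M" unfolding g_def by measurable
    have "AE \<omega> in M. norm (g \<omega>) \<le> 1" unfolding g_def by (simp add: indicator_def)
    then have gi: "integrable M g" by (rule integrable_const_bound) measurable
    have key: "AE \<omega> in M. (T \<omega> + e) ^ p * real_cond_exp M F g \<omega> \<le> T \<omega> ^ p" if p1: "p \<ge> 1" for p :: nat
    proof -
      define f where "f \<omega> = (T \<omega> + e) ^ p" for \<omega>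
      have fm[measurable]: "f \<in> borel_measurable F" unfolding f_def by measurable
      have fmM[measurable]: "f \<in> borel_measurable M" unfolding f_def by measurable
      have "AE \<omega> in M. norm (f \<omega> * g \<omega>) \<le> (C' + e) ^ p"
        using NT
      proof eventually_elim
        case (elim \<omega>)
        have "0 \<le> T \<omega> + e" using T0[of \<omega>] \<open>e > 0\<close> by linarith
        moreover have "T \<omega> + e \<le> C' + e" using elim by linarith
        ultimately have "(T \<omega> + e) ^ p \<le> (C' + e) ^ p" by (intro power_mono)
        moreover have "0 \<le> (T \<omega> + e) ^ p" using \<open>0 \<le> T \<omega> + e\<close> by simp
        ultimately have "\<bar>f \<omega>\<bar> \<le> (C' + e) ^ p" unfolding f_def by linarith
        moreover have "\<bar>g \<omega>\<bar> \<le> 1" unfolding g_def by (simp add: indicator_def)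
        ultimately have "\<bar>f \<omega>\<bar> * \<bar>g \<omega>\<bar> \<le> (C' + e) ^ p * 1"
          by (intro mult_mono) simp_all
        then show ?case by (simp add: abs_mult)
      qed
      then have fgi: "integrable M (\<lambda>\<omega>. f \<omega> * g \<omega>)"
        by (rule integrable_const_bound) measurable
      have mult: "AE \<omega> in M. real_cond_exp M F (\<lambda>\<omega>. f \<omega> * g \<omega>) \<omega> = f \<omega> * real_cond_exp M F g \<omega>"
        by (rule real_cond_exp_mult[OF fm gm fgi])
      have "AE \<omega> in M. norm (S \<omega> ^ p) \<le> C' ^ p"
        using assms(4) SC'
      proof eventually_elim
        case (elim \<omega>)
        then have "\<bar>S \<omega>\<bar> \<le> C'" by linarith
        then have "\<bar>S \<omega>\<bar> ^ p \<le> C' ^ p" by (rule power_mono) simp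
        then show ?case by (metis power_abs real_norm_def)
      qed
      then have i1: "integrable M (\<lambda>\<omega>. S \<omega> ^ p)"
        by (rule integrable_const_bound) measurable
      have "AE \<omega> in M. f \<omega> * g \<omega> \<le> S \<omega> ^ p"
        using assms(4)
      proof eventually_elim
        case (elim \<omega>)
        show ?case
        proof (cases "\<omega> \<in> A")
          case True
          then have "T \<omega> + e \<le> S \<omega>" unfolding A_def by simp
          moreover have "0 \<le> T \<omega> + e" using T0[of \<omega>] \<open>e > 0\<close> by linarith
          ultimately have "(T \<omega> + e) ^ p \<le> S \<omega> ^ p" by (rule power_mono)
          then show ?thesis using True unfolding f_def g_def by simp
        next
          case False
          then show ?thesis using elim unfolding g_def by simp
        qed
      qed
      then have mono: "AE \<omega> in M. real_cond_exp M F (\<lambda>\<omega>. f \<omega> * g \<omega>) \<omega> \<le> real_cond_exp M F (\<lambda>\<omega>. S \<omega> ^ p) \<omega>"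
        by (rule real_cond_exp_mono[OF _ fgi i1])
      show ?thesis using mult mono ceT[OF that]
        by eventually_elim (simp add: f_def)
    qed
    have "AE \<omega> in M. \<forall>p::nat. p \<ge> 1 \<longrightarrow> (T \<omega> + e) ^ p * real_cond_exp M F g \<omega> \<le> T \<omega> ^ p"
      unfolding AE_all_countable
    proof
      fix p :: nat show "AE \<omega> in M. p \<ge> 1 \<longrightarrow> (T \<omega> + e) ^ p * real_cond_exp M F g \<omega> \<le> T \<omega> ^ p"
        by (cases "p \<ge> 1") (use key[of p] in \<open>simp_all add: eventually_mono\<close>)
    qed
    moreover have gpos: "AE \<omega> in M. real_cond_exp M F g \<omega> \<ge> 0"
      by (rule real_cond_exp_pos) (simp_all add: g_def)
    ultimately have z: "AE \<omega> in M. real_cond_exp M F g \<omega> = 0"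
    proof eventually_elim
      case (elim \<omega>)
      have "real_cond_exp M F g \<omega> \<le> 0"
        by (rule limit_aux[OF T0 \<open>e > 0\<close>]) (use elim in blast)
      then show ?case using elim by linarith
    qed
    have "integral\<^sup>L M (real_cond_exp M F g) = integral\<^sup>L M (\<lambda>_. 0::real)"
      by (rule integral_cong_AE[OF _ _ z]) simp_all
    then have "integral\<^sup>L M g = 0" using real_cond_exp_int(2)[OF gi] by simp
    then have "measure M A = 0" unfolding g_def by simp
    then have "A \<in> null_sets M" using A by (simp add: emeasure_eq_measure null_setsI)
    then show ?thesis
      by (rule AE_I') (auto simp: A_def)
  qed
  have "AE \<omega> in M. \<forall>n::nat. S \<omega> \<le> T \<omega> + 1 / real (Suc n)"
    unfolding AE_all_countable by (intro allI epsstep) simp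
  then show ?thesis using NT
  proof eventually_elim
    case (elim \<omega>)
    have "S \<omega> \<le> T \<omega>"
    proof (rule ccontr)
      assume "\<not> S \<omega> \<le> T \<omega>"
      then have "S \<omega> - T \<omega> > 0" by simp
      then obtain n where "1 / real (Suc n) < S \<omega> - T \<omega>" by (rule nat_approx_posE)
      moreover have "S \<omega> \<le> T \<omega> + 1 / real (Suc n)" using elim by blast
      ultimately show False by linarith
    qed
    then show ?case using elim unfolding N_def by simp
  qed
qed



lemma cn_ge:
  fixes a :: "'k::{field,metric_space} \<Rightarrow> real" and U :: "'a \<Rightarrow> 'k"
  assumes "local_field_abs a" "prob_space M" "subalgebra M F"
    "(\<lambda>\<omega>. a (U \<omega>)) \<in> borel_measurable M" "AE \<omega> in M. a (U \<omega>) \<le> C"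
  shows "AE \<omega> in M. ereal (a (U \<omega>)) \<le> cond_norm M F a U \<omega>"
  unfolding cond_norm_def
  by (rule cesup_ge[OF assms(2,3,4) _ assms(5)]) (simp add: lf_basic(5)[OF assms(1)])

lemma cn_le:
  fixes a :: "'k::{field,metric_space} \<Rightarrow> real" and U :: "'a \<Rightarrow> 'k"
  assumes "local_field_abs a" "prob_space M" "subalgebra M F"
    "(\<lambda>\<omega>. a (U \<omega>)) \<in> borel_measurable M" "AE \<omega> in M. a (U \<omega>) \<le> C"
    "Q \<in> borel_measurable F" "AE \<omega> in M. ereal (a (U \<omega>)) \<le> Q \<omega>"
  shows "AE \<omega> in M. cond_norm M F a U \<omega> \<le> Q \<omega>"
  unfolding cond_norm_def
  by (rule cesup_le[OF assms(2,3,4) _ assms(5,6,7)]) (simp add: lf_basic(5)[OF assms(1)])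

lemma cn_meas: "cond_norm M F a U \<in> borel_measurable F"
  unfolding cond_norm_def by (rule cesup_meas)

lemma ereal_max_le:
  fixes x u v :: real and Q :: ereal
  assumes "x \<le> max u v" "ereal u \<le> Q" "ereal v \<le> Q"
  shows "ereal x \<le> Q"
proof (cases "u \<le> v")
  case True
  then have "ereal x \<le> ereal v" using assms(1) by simp
  then show ?thesis using assms(3) by (rule order_trans)
next
  case False
  then have "ereal x \<le> ereal u" using assms(1) by simp
  then show ?thesis using assms(2) by (rule order_trans)
qed

lemma diff_bound:
  fixes a :: "'k::{field,metric_space} \<Rightarrow> real" and U V :: "'a \<Rightarrow> 'k"
  assumes "local_field_abs a" "AE \<omega> in M. a (U \<omega>) \<le> C1" "AE \<omega> in M. a (V \<omega>) \<le> C2"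
  shows "AE \<omega> in M. a (U \<omega> - V \<omega>) \<le> max C1 C2"
  using assms(2,3)
proof eventually_elim
  case (elim \<omega>)
  note B = lf_basic[OF assms(1)]
  have "a (U \<omega> - V \<omega>) \<le> max (a (U \<omega> - 0)) (a (0 - V \<omega>))" by (rule B(8))
  then show ?case using elim B(6)[of "V \<omega>"] by simp
qed

theorem mainTheorem15:
  fixes M G H :: "'a measure" and a :: "'k::{field,metric_space} \<Rightarrow> real"
    and X Y Z :: "'a \<Rightarrow> 'k"
  assumes "prob_space M"
    and "local_field_abs a"
    and "subalgebra M G" and "subalgebra M H" and "sets G \<subseteq> sets H"
    and "Linf M M a X"
    and "Y \<in> cond_exp_set M H a X"
    and "Z \<in> cond_exp_set M G a Y"
  shows "Z \<in> cond_exp_set M G a X"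
proof -
  note B = lf_basic[OF assms(2)]
  have HG: "subalgebra H G" using assms(3,4,5) unfolding subalgebra_def by auto
  have LY: "Linf M H a Y" and hY: "\<And>W. Linf M H a W \<Longrightarrow>
      AE \<omega> in M. cond_norm M H a (\<lambda>\<omega>. X \<omega> - Y \<omega>) \<omega> \<le> cond_norm M H a (\<lambda>\<omega>. X \<omega> - W \<omega>) \<omega>"
    using assms(7) unfolding cond_exp_set_def by auto
  have LZ: "Linf M G a Z" and hZ: "\<And>W. Linf M G a W \<Longrightarrow>
      AE \<omega> in M. cond_norm M G a (\<lambda>\<omega>. Y \<omega> - Z \<omega>) \<omega> \<le> cond_norm M G a (\<lambda>\<omega>. Y \<omega> - W \<omega>) \<omega>"
    using assms(8) unfolding cond_exp_set_def by auto
  obtain Cx where Xm: "X \<in> borel_measurable M" and Cx: "AE \<omega> in M. a (X \<omega>) \<le> Cx"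
    using assms(6) unfolding Linf_def by auto
  obtain Cy where Ym: "Y \<in> borel_measurable H" and Cy: "AE \<omega> in M. a (Y \<omega>) \<le> Cy"
    using LY unfolding Linf_def by auto
  obtain Cz where Zm: "Z \<in> borel_measurable G" and Cz: "AE \<omega> in M. a (Z \<omega>) \<le> Cz"
    using LZ unfolding Linf_def by auto
  have YmM: "Y \<in> borel_measurable M" using measurable_from_subalg[OF assms(4) Ym] .
  have ZmM: "Z \<in> borel_measurable M" using measurable_from_subalg[OF assms(3) Zm] .
  show ?thesis
    unfolding cond_exp_set_def
  proof (intro CollectI conjI allI impI)
    show "Linf M G a Z" by fact
    fix W assume LW: "Linf M G a W"
    obtain Cw where Wm: "W \<in> borel_measurable G" and Cw: "AE \<omega> in M. a (W \<omega>) \<le> Cw"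
      using LW unfolding Linf_def by auto
    have WmM: "W \<in> borel_measurable M" using measurable_from_subalg[OF assms(3) Wm] .
    have WmH: "W \<in> borel_measurable H" using measurable_from_subalg[OF HG Wm] .
    have LWH: "Linf M H a W" unfolding Linf_def using WmH Cw by auto
    have mXY: "(\<lambda>\<omega>. a (X \<omega> - Y \<omega>)) \<in> borel_measurable M" by (rule lf_meas[OF assms(2) Xm YmM])
    have mXW: "(\<lambda>\<omega>. a (X \<omega> - W \<omega>)) \<in> borel_measurable M" by (rule lf_meas[OF assms(2) Xm WmM])
    have mYW: "(\<lambda>\<omega>. a (Y \<omega> - W \<omega>)) \<in> borel_measurable M" by (rule lf_meas[OF assms(2) YmM WmM])
    have mYZ: "(\<lambda>\<omega>. a (Y \<omega> - Z \<omega>)) \<in> borel_measurable M" by (rule lf_meas[OF assms(2) YmM ZmM])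
    have mXZ: "(\<lambda>\<omega>. a (X \<omega> - Z \<omega>)) \<in> borel_measurable M" by (rule lf_meas[OF assms(2) Xm ZmM])
    have bXY: "AE \<omega> in M. a (X \<omega> - Y \<omega>) \<le> max Cx Cy" by (rule diff_bound[OF assms(2) Cx Cy])
    have bXW: "AE \<omega> in M. a (X \<omega> - W \<omega>) \<le> max Cx Cw" by (rule diff_bound[OF assms(2) Cx Cw])
    have bYW: "AE \<omega> in M. a (Y \<omega> - W \<omega>) \<le> max Cy Cw" by (rule diff_bound[OF assms(2) Cy Cw])
    have bYZ: "AE \<omega> in M. a (Y \<omega> - Z \<omega>) \<le> max Cy Cz" by (rule diff_bound[OF assms(2) Cy Cz])
    have bXZ: "AE \<omega> in M. a (X \<omega> - Z \<omega>) \<le> max Cx Cz" by (rule diff_bound[OF assms(2) Cx Cz])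
    define QXW where "QXW = cond_norm M G a (\<lambda>\<omega>. X \<omega> - W \<omega>)"
    have QG: "QXW \<in> borel_measurable G" unfolding QXW_def by (rule cn_meas)
    have QH: "QXW \<in> borel_measurable H" using measurable_from_subalg[OF HG QG] .
    have a1: "AE \<omega> in M. ereal (a (X \<omega> - Y \<omega>)) \<le> cond_norm M H a (\<lambda>\<omega>. X \<omega> - Y \<omega>) \<omega>"
      by (rule cn_ge[OF assms(2,1,4) mXY bXY])
    have a2: "AE \<omega> in M. cond_norm M H a (\<lambda>\<omega>. X \<omega> - Y \<omega>) \<omega> \<le> cond_norm M H a (\<lambda>\<omega>. X \<omega> - W \<omega>) \<omega>"
      by (rule hY[OF LWH])
    have a3: "AE \<omega> in M. ereal (a (X \<omega> - W \<omega>)) \<le> QXW \<omega>"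
      unfolding QXW_def by (rule cn_ge[OF assms(2,1,3) mXW bXW])
    have a4: "AE \<omega> in M. cond_norm M H a (\<lambda>\<omega>. X \<omega> - W \<omega>) \<omega> \<le> QXW \<omega>"
      by (rule cn_le[OF assms(2,1,4) mXW bXW QH a3])
    have a5: "AE \<omega> in M. ereal (a (X \<omega> - Y \<omega>)) \<le> QXW \<omega>"
      using a1 a2 a4 by eventually_elim (blast intro: order_trans)
    have s2: "AE \<omega> in M. cond_norm M G a (\<lambda>\<omega>. X \<omega> - Y \<omega>) \<omega> \<le> QXW \<omega>"
      by (rule cn_le[OF assms(2,1,3) mXY bXY QG a5])
    have g1: "AE \<omega> in M. ereal (a (X \<omega> - Y \<omega>)) \<le> cond_norm M G a (\<lambda>\<omega>. X \<omega> - Y \<omega>) \<omega>"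
      by (rule cn_ge[OF assms(2,1,3) mXY bXY])
    have b1: "AE \<omega> in M. ereal (a (Y \<omega> - W \<omega>)) \<le> QXW \<omega>"
      using g1 s2 a3
    proof eventually_elim
      case (elim \<omega>)
      have "a (Y \<omega> - W \<omega>) \<le> max (a (Y \<omega> - X \<omega>)) (a (X \<omega> - W \<omega>))" by (rule B(8))
      moreover have "a (Y \<omega> - X \<omega>) = a (X \<omega> - Y \<omega>)" using B(1) by (metis dist_commute)
      ultimately have "a (Y \<omega> - W \<omega>) \<le> max (a (X \<omega> - Y \<omega>)) (a (X \<omega> - W \<omega>))" by simp
      moreover have "ereal (a (X \<omega> - Y \<omega>)) \<le> QXW \<omega>" using elim by (blast intro: order_trans)
      ultimately show ?case using elim by (blast intro: ereal_max_le)
    qed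
    have s4: "AE \<omega> in M. cond_norm M G a (\<lambda>\<omega>. Y \<omega> - W \<omega>) \<omega> \<le> QXW \<omega>"
      by (rule cn_le[OF assms(2,1,3) mYW bYW QG b1])
    have c1: "AE \<omega> in M. cond_norm M G a (\<lambda>\<omega>. Y \<omega> - Z \<omega>) \<omega> \<le> cond_norm M G a (\<lambda>\<omega>. Y \<omega> - W \<omega>) \<omega>"
      by (rule hZ[OF LW])
    have c2: "AE \<omega> in M. ereal (a (Y \<omega> - Z \<omega>)) \<le> cond_norm M G a (\<lambda>\<omega>. Y \<omega> - Z \<omega>) \<omega>"
      by (rule cn_ge[OF assms(2,1,3) mYZ bYZ])
    have d1: "AE \<omega> in M. ereal (a (X \<omega> - Z \<omega>)) \<le> QXW \<omega>"
      using g1 s2 c1 c2 s4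
    proof eventually_elim
      case (elim \<omega>)
      have "a (X \<omega> - Z \<omega>) \<le> max (a (X \<omega> - Y \<omega>)) (a (Y \<omega> - Z \<omega>))" by (rule B(8))
      moreover have "ereal (a (X \<omega> - Y \<omega>)) \<le> QXW \<omega>" using elim by (blast intro: order_trans)
      moreover have "ereal (a (Y \<omega> - Z \<omega>)) \<le> QXW \<omega>" using elim by (blast intro: order_trans)
      ultimately show ?case by (rule ereal_max_le)
    qed
    show "AE \<omega> in M. cond_norm M G a (\<lambda>\<omega>. X \<omega> - Z \<omega>) \<omega> \<le> cond_norm M G a (\<lambda>\<omega>. X \<omega> - W \<omega>) \<omega>"
      using cn_le[OF assms(2,1,3) mXZ bXZ QG d1] unfolding QXW_def .
  qed
qed


end
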